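(* The typed $\pi$-calculus $\pi$ terminates: if $\Gamma\vdash^{\pi}D$, then there is no infinite reduction sequence $D\to D_1\to D_2\to\cdots$.
   Context: Processes up to $\alpha$-renaming of bound names; $[z^+/y^+]D$ is capture-avoiding substitution of names. Syntax (braces $\{\ldots\}$ mark optional parts): declarations $D::=\nu x\,D\mid\nu x\,(x(y_1,\ldots,y_n).D\mid D)\mid\nu x\,(!x(y_1,\ldots,y_n).D\mid D)\mid M$; terms $M::=\overline{x}(y_1,\ldots,y_n)\mid(M\mid M)$ ($n\ge1$); evaluation contexts $E::=[\,]\mid E[\nu x\,[\,]]\mid E[\nu x\,(\{!\}x(y^+).D\mid[\,])]\mid E[[\,]\mid M]\mid E[M\mid[\,]]$; types $A::=\langle1\rangle\mid\langle A_1,\ldots,A_n\rangle$. Convention: when a declaration is placed in a term position (e.g. in a parallel composition or a context hole), its $\nu$-binders and definitions are moved outward in front (renamed apart). Structural congruence $\equiv$: least equivalence closed under $\alpha$-renaming and the operators with $\nu x_1(\{\{!\}x_1(y_1^+).D_1\mid\}\nu x_2(\{\{!\}x_2(y_2^+).D_2\mid\}D))\equiv\nu x_2(\{\{!\}x_2(y_2^+).D_2\mid\}\nu x_1(\{\{!\}x_1(y_1^+).D_1\mid\}D))$ if $x_1\notin FV(\lambda y_1^+.D_1)$ and $x_2\notin FV(\lambda y_2^+.D_2)$, and $\nu x(\{\{!\}x(y^+).D'\mid\}D)\equiv D$ if $x\notin FV(D)$. Reduction: least relation containing $E[\nu x\,(!x(y^+).D\mid E'[\overline{x}z^+])]\to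 E[\nu x\,(!x(y^+).D\mid E'[[z^+/y^+]D])]$ and $E[\nu x\,(x(y^+).D\mid E'[\overline{x}z^+])]\to E[\nu x\,(E'[[z^+/y^+]D])]$ (with $y^+,z^+$ of equal length), closed under $\equiv$. Typing ($\Gamma$ a finite map from names to types): $\Gamma\vdash^\pi\nu x\,D$ if $\Gamma,x:A\vdash^\pi D$ for some $A$; $\Gamma\vdash^\pi\nu x\,(\{!\}x(y_1,\ldots,y_n).D'\mid D)$ if $\Gamma,y_1:A_1,\ldots,y_n:A_n\vdash^\pi D'$ and $\Gamma,x:\langle A_1,\ldots,A_n\rangle\vdash^\pi D$; $\Gamma\vdash^\pi\overline{x}(y_1,\ldots,y_n)$ if $x:\langle A_1,\ldots,A_n\rangle\in\Gamma$ and $y_i:A_i\in\Gamma$ for all $i$; $\Gamma\vdash^\pi(M_1\mid M_2)$ if $\Gamma\vdash^\pi M_i$ for $i=1,2$. *)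

theory Defs
  imports Main
begin

section \<open>Syntax of the typed pi-calculus (named representation)\<close>

type_synonym name = nat

datatype trm = Out name "name list" | Par trm trm

text \<open>Def b x ys D' D  stands for  nu x (x(ys).D' | D)  (b = False) resp.
   nu x (!x(ys).D' | D)  (b = True).  The name x is bound in D (not in D');
   the names ys are bound in D'.\<close>
datatype dcl = Nu name dcl | Def bool name "name list" dcl dcl | Tm trm

text \<open>A single bndr prefix  nu x [ ]  or  nu x ({!}x(ys).D' | [ ]).\<close>
datatype bndr = BNu name | BDef bool name "name list" dcl

datatype tctx = THole | TParL tctx trm | TParR trm tctx

datatype ty = One | Ch "ty list"

fun bind1 :: "bndr \<Rightarrow> dcl \<Rightarrow> dcl" where
  "bind1 (BNu x) D = Nu x D"
| "bind1 (BDef b x ys D1) D = Def b x ys D1 D"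

definition bind :: "bndr list \<Rightarrow> dcl \<Rightarrow> dcl" where
  "bind Bs D = foldr bind1 Bs D"

fun bnd :: "bndr \<Rightarrow> name" where
  "bnd (BNu x) = x"
| "bnd (BDef b x ys D1) = x"

fun fvt :: "trm \<Rightarrow> name set" where
  "fvt (Out x ys) = insert x (set ys)"
| "fvt (Par M N) = fvt M \<union> fvt N"

fun fv :: "dcl \<Rightarrow> name set" where
  "fv (Nu x D) = fv D - {x}"
| "fv (Def b x ys D1 D2) = (fv D1 - set ys) \<union> (fv D2 - {x})"
| "fv (Tm M) = fvt M"

fun fvb :: "bndr \<Rightarrow> name set" where
  "fvb (BNu x) = {}"
| "fvb (BDef b x ys D1) = fv D1 - set ys"

fun bn :: "dcl \<Rightarrow> name set" where
  "bn (Nu x D) = insert x (bn D)"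
| "bn (Def b x ys D1 D2) = insert x (set ys \<union> bn D1 \<union> bn D2)"
| "bn (Tm M) = {}"

text \<open>Names of the outermost binders of a declaration (those moved outward
  when the declaration is placed in a term position).\<close>
fun topbn :: "dcl \<Rightarrow> name set" where
  "topbn (Nu x D) = insert x (topbn D)"
| "topbn (Def b x ys D1 D2) = insert x (topbn D2)"
| "topbn (Tm M) = {}"

definition swapn :: "name \<Rightarrow> name \<Rightarrow> name \<Rightarrow> name" where
  "swapn a c n = (if n = a then c else if n = c then a else n)"

text \<open>Apply a name function to every name occurrence (free and bound).\<close>
fun mapt :: "(name \<Rightarrow> name) \<Rightarrow> trm \<Rightarrow> trm" where
  "mapt f (Out x ys) = Out (f x) (map f ys)"
| "mapt f (Par M N) = Par (mapt f M) (mapt f N)"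

fun mapd :: "(name \<Rightarrow> name) \<Rightarrow> dcl \<Rightarrow> dcl" where
  "mapd f (Nu x D) = Nu (f x) (mapd f D)"
| "mapd f (Def b x ys D1 D2) = Def b (f x) (map f ys) (mapd f D1) (mapd f D2)"
| "mapd f (Tm M) = Tm (mapt f M)"

text \<open>Substitution of free names (non-renaming; capture is excluded by side
  conditions, which can always be met up to alpha-renaming).\<close>
fun substd :: "(name \<Rightarrow> name) \<Rightarrow> dcl \<Rightarrow> dcl" where
  "substd \<sigma> (Nu x D) = Nu x (substd (\<sigma>(x := x)) D)"
| "substd \<sigma> (Def b x ys D1 D2) =
     Def b x ys (substd (\<lambda>n. if n \<in> set ys then n else \<sigma> n) D1) (substd (\<sigma>(x := x)) D2)"
| "substd \<sigma> (Tm M) = Tm (mapt \<sigma> M)"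

definition sub :: "name list \<Rightarrow> name list \<Rightarrow> name \<Rightarrow> name" where
  "sub ys zs n = (case (Map.empty(ys [\<mapsto>] zs)) n of None \<Rightarrow> n | Some z \<Rightarrow> z)"

section \<open>Contexts and the placement convention\<close>

fun tplug :: "tctx \<Rightarrow> trm \<Rightarrow> trm" where
  "tplug THole M = M"
| "tplug (TParL T N) M = Par (tplug T M) N"
| "tplug (TParR N T) M = Par N (tplug T M)"

fun tfv :: "tctx \<Rightarrow> name set" where
  "tfv THole = {}"
| "tfv (TParL T N) = tfv T \<union> fvt N"
| "tfv (TParR N T) = fvt N \<union> tfv T"

text \<open>Placing a declaration in the hole of a term context: its binders are
  moved outward in front (they must be apart from the context's names).\<close>
fun ext :: "dcl \<Rightarrow> tctx \<Rightarrow> dcl" where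
  "ext (Nu x D) T = Nu x (ext D T)"
| "ext (Def b x ys D1 D2) T = Def b x ys D1 (ext D2 T)"
| "ext (Tm M) T = Tm (tplug T M)"

fun wft :: "trm \<Rightarrow> bool" where
  "wft (Out x ys) = (ys \<noteq> [])"
| "wft (Par M N) = (wft M \<and> wft N)"

fun wfd :: "dcl \<Rightarrow> bool" where
  "wfd (Nu x D) = wfd D"
| "wfd (Def b x ys D1 D2) = (ys \<noteq> [] \<and> wfd D1 \<and> wfd D2)"
| "wfd (Tm M) = wft M"

fun wfb :: "bndr \<Rightarrow> bool" where
  "wfb (BNu x) = True"
| "wfb (BDef b x ys D1) = (ys \<noteq> [] \<and> wfd D1)"

section \<open>Structural congruence (including alpha-renaming)\<close>

inductive scong :: "dcl \<Rightarrow> dcl \<Rightarrow> bool" (infix "\<equiv>\<^sub>\<pi>" 50) where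
  sc_refl: "D \<equiv>\<^sub>\<pi> D"
| sc_sym: "D \<equiv>\<^sub>\<pi> D' \<Longrightarrow> D' \<equiv>\<^sub>\<pi> D"
| sc_trans: "D \<equiv>\<^sub>\<pi> D' \<Longrightarrow> D' \<equiv>\<^sub>\<pi> D'' \<Longrightarrow> D \<equiv>\<^sub>\<pi> D''"
| sc_bind: "D \<equiv>\<^sub>\<pi> D' \<Longrightarrow> bind1 \<beta> D \<equiv>\<^sub>\<pi> bind1 \<beta> D'"
| sc_body: "D1 \<equiv>\<^sub>\<pi> D1' \<Longrightarrow> Def b x ys D1 D \<equiv>\<^sub>\<pi> Def b x ys D1' D"
| sc_alpha_nu: "c \<notin> fv D \<Longrightarrow> Nu a D \<equiv>\<^sub>\<pi> Nu c (mapd (swapn a c) D)"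
| sc_alpha_def: "c \<notin> fv D2 \<Longrightarrow> Def b a ys D1 D2 \<equiv>\<^sub>\<pi> Def b c ys D1 (mapd (swapn a c) D2)"
| sc_alpha_par: "a \<notin> fv D1 - set ys \<Longrightarrow> c \<notin> fv D1 - set ys \<Longrightarrow>
     Def b x ys D1 D2 \<equiv>\<^sub>\<pi> Def b x (map (swapn a c) ys) (mapd (swapn a c) D1) D2"
| sc_swap: "bnd \<beta>1 \<noteq> bnd \<beta>2 \<Longrightarrow>
     bnd \<beta>1 \<notin> fvb \<beta>1 \<Longrightarrow> bnd \<beta>2 \<notin> fvb \<beta>2 \<Longrightarrow>
     bnd \<beta>1 \<notin> fvb \<beta>2 \<Longrightarrow> bnd \<beta>2 \<notin> fvb \<beta>1 \<Longrightarrow>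
     bind1 \<beta>1 (bind1 \<beta>2 D) \<equiv>\<^sub>\<pi> bind1 \<beta>2 (bind1 \<beta>1 D)"
| sc_gc: "bnd \<beta> \<notin> fv D \<Longrightarrow> wfb \<beta> \<Longrightarrow> bind1 \<beta> D \<equiv>\<^sub>\<pi> D"

section \<open>Reduction\<close>

text \<open>An evaluation context E is (by the placement convention) a prefix of
  binders B followed by a term context T.  The side conditions express that
  bound names are chosen apart (Barendregt convention); reduction is closed
  under structural congruence, which includes alpha-renaming.\<close>

inductive red :: "dcl \<Rightarrow> dcl \<Rightarrow> bool" (infix "\<longrightarrow>\<^sub>\<pi>" 50) where
  red_rep: "length ys = length zs \<Longrightarrow>
     x \<notin> bnd ` set B' \<Longrightarrow>
     (fv D - set ys) \<inter> insert x (bnd ` set B') = {} \<Longrightarrow>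
     bn D \<inter> set zs = {} \<Longrightarrow>
     topbn D \<inter> tfv T = {} \<Longrightarrow>
     bind B (Def True x ys D (bind B' (Tm (tplug T (Out x zs)))))
       \<longrightarrow>\<^sub>\<pi> bind B (Def True x ys D (bind B' (ext (substd (sub ys zs) D) T)))"
| red_lin: "length ys = length zs \<Longrightarrow>
     x \<notin> bnd ` set B' \<Longrightarrow>
     (fv D - set ys) \<inter> insert x (bnd ` set B') = {} \<Longrightarrow>
     bn D \<inter> set zs = {} \<Longrightarrow>
     topbn D \<inter> tfv T = {} \<Longrightarrow>
     bind B (Def False x ys D (bind B' (Tm (tplug T (Out x zs)))))
       \<longrightarrow>\<^sub>\<pi> bind B (Nu x (bind B' (ext (substd (sub ys zs) D) T)))"
| red_cong: "P \<equiv>\<^sub>\<pi> P' \<Longrightarrow> P' \<longrightarrow>\<^sub>\<pi> Q' \<Longrightarrow> Q' \<equiv>\<^sub>\<pi> Q \<Longrightarrow> P \<longrightarrow>\<^sub>\<pi> Q"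

section \<open>Typing\<close>

inductive typt :: "(name \<rightharpoonup> ty) \<Rightarrow> trm \<Rightarrow> bool" where
  typt_out: "ys \<noteq> [] \<Longrightarrow> \<Gamma> x = Some (Ch As) \<Longrightarrow>
     list_all2 (\<lambda>y A. \<Gamma> y = Some A) ys As \<Longrightarrow> typt \<Gamma> (Out x ys)"
| typt_par: "typt \<Gamma> M1 \<Longrightarrow> typt \<Gamma> M2 \<Longrightarrow> typt \<Gamma> (Par M1 M2)"

inductive typd :: "(name \<rightharpoonup> ty) \<Rightarrow> dcl \<Rightarrow> bool" where
  typd_nu: "typd (\<Gamma>(x \<mapsto> A)) D \<Longrightarrow> typd \<Gamma> (Nu x D)"
| typd_def: "ys \<noteq> [] \<Longrightarrow> length As = length ys \<Longrightarrow>
     typd (\<Gamma>(ys [\<mapsto>] As)) D1 \<Longrightarrow> typd (\<Gamma>(x \<mapsto> Ch As)) D2 \<Longrightarrow>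
     typd \<Gamma> (Def b x ys D1 D2)"
| typd_tm: "typt \<Gamma> M \<Longrightarrow> typd \<Gamma> (Tm M)"

end

theory Submission
  imports Defs
begin


datatype val = Atom | Clo "name list" dcl "name \<Rightarrow> val"

fun upds :: "(name \<Rightarrow> val) \<Rightarrow> name list \<Rightarrow> val list \<Rightarrow> (name \<Rightarrow> val)" where
  "upds s (y#ys) (v#vs) = upds (s(y:=v)) ys vs"
| "upds s _ _ = s"

inductive ev :: "(name \<Rightarrow> val) \<Rightarrow> dcl \<Rightarrow> nat \<Rightarrow> bool"
  and evt :: "(name \<Rightarrow> val) \<Rightarrow> trm \<Rightarrow> nat \<Rightarrow> bool"
  and app :: "val \<Rightarrow> val list \<Rightarrow> nat \<Rightarrow> bool" where
  ev_nu: "ev (r(x:=Atom)) D n \<Longrightarrow> ev r (Nu x D) n"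
| ev_def: "ev (r(x:=Clo ys D1 r)) D2 n \<Longrightarrow> ev r (Def b x ys D1 D2) n"
| ev_tm: "evt r M n \<Longrightarrow> ev r (Tm M) n"
| evt_out: "app (r x) (map r zs) n \<Longrightarrow> evt r (Out x zs) n"
| evt_par: "evt r M a \<Longrightarrow> evt r N b \<Longrightarrow> evt r (Par M N) (a+b)"
| app_atom: "app Atom vs 0"
| app_bad: "length ys \<noteq> length vs \<Longrightarrow> app (Clo ys D s) vs 0"
| app_clo: "length ys = length vs \<Longrightarrow> ev (upds s ys vs) D m \<Longrightarrow> app (Clo ys D s) vs (Suc m)"

inductive_cases evNuE: "ev r (Nu x D) n"
inductive_cases evDefE: "ev r (Def b x ys D1 D2) n"
inductive_cases evTmE: "ev r (Tm M) n"
inductive_cases evtOutE: "evt r (Out x zs) n"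
inductive_cases evtParE: "evt r (Par M N) n"
inductive_cases appAtomE: "app Atom vs n"
inductive_cases appCloE: "app (Clo ys D s) vs n"

definition shape :: "val \<Rightarrow> val \<Rightarrow> bool" where
  "shape v v' = (case v' of Atom \<Rightarrow> v = Atom
     | Clo ys' D' s' \<Rightarrow> (case v of Atom \<Rightarrow> True | Clo ys D s \<Rightarrow> length ys = length ys'))"

primrec rel :: "nat \<Rightarrow> val \<Rightarrow> val \<Rightarrow> bool" where
  "rel 0 v v' = shape v v'"
| "rel (Suc k) v v' = (rel k v v' \<and> (\<forall>vs vs' n'. list_all2 (rel k) vs vs' \<longrightarrow> app v' vs' n' \<longrightarrow> n' \<le> Suc k \<longrightarrow> (\<exists>n\<le>n'. app v vs n)))"

lemma rel_down: "rel k v v' \<Longrightarrow> j \<le> k \<Longrightarrow> rel j v v'"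
  by (induction k) (auto simp: le_Suc_eq)

lemma rel_shape: "rel k v v' \<Longrightarrow> shape v v'"
  using rel_down[of k v v' 0] by simp

lemma rel_Atom: "rel k Atom v"
  by (induction k) (auto simp: shape_def intro: app_atom split: val.splits)

lemma list_all2_rel_down: "list_all2 (rel k) vs vs' \<Longrightarrow> j \<le> k \<Longrightarrow> list_all2 (rel j) vs vs'"
  by (erule list_all2_mono) (rule rel_down)

lemma app_rel:
  assumes "rel k v v'" "list_all2 (rel k) vs vs'" "app v' vs' n'" "n' \<le> k"
  shows "\<exists>n\<le>n'. app v vs n"
proof (cases n')
  case 0
  have sh: "shape v v'" using assms(1) by (rule rel_shape)
  have len: "length vs = length vs'" using assms(2) by (rule list_all2_lengthD)
  show ?thesis
  proof (cases v')
    case Atom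
    then have "v = Atom" using sh by (simp add: shape_def)
    then show ?thesis using app_atom by blast
  next
    case (Clo ys' D' s')
    then have "length ys' \<noteq> length vs'" using assms(3) 0 by (auto elim: appCloE)
    then show ?thesis using sh Clo len 0
      by (cases v) (auto simp: shape_def intro!: exI[of _ 0] app_atom app_bad)
  qed
next
  case (Suc j)
  have "rel (Suc j) v v'" using rel_down[OF assms(1), of "Suc j"] assms(4) Suc by simp
  moreover have "list_all2 (rel j) vs vs'" using list_all2_rel_down[OF assms(2), of j] assms(4) Suc by simp
  ultimately show ?thesis using assms(3,4) Suc by (simp only: rel.simps)
qed

definition updR :: "(name \<Rightarrow> name \<Rightarrow> bool) \<Rightarrow> name \<Rightarrow> name \<Rightarrow> name \<Rightarrow> name \<Rightarrow> bool" where
  "updR R x x' = (\<lambda>a b. (a = x \<and> b = x') \<or> (a \<noteq> x \<and> b \<noteq> x' \<and> R a b))"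

fun updsR :: "(name \<Rightarrow> name \<Rightarrow> bool) \<Rightarrow> name list \<Rightarrow> name list \<Rightarrow> name \<Rightarrow> name \<Rightarrow> bool" where
  "updsR R (y#ys) (y'#ys') = updsR (updR R y y') ys ys'"
| "updsR R _ _ = R"

inductive rent :: "(name \<Rightarrow> name \<Rightarrow> bool) \<Rightarrow> trm \<Rightarrow> trm \<Rightarrow> bool" where
  rent_out: "R x x' \<Longrightarrow> list_all2 R zs zs' \<Longrightarrow> rent R (Out x zs) (Out x' zs')"
| rent_par: "rent R M M' \<Longrightarrow> rent R N N' \<Longrightarrow> rent R (Par M N) (Par M' N')"

inductive ren :: "(name \<Rightarrow> name \<Rightarrow> bool) \<Rightarrow> dcl \<Rightarrow> dcl \<Rightarrow> bool" where
  ren_nu: "ren (updR R x x') D D' \<Longrightarrow> ren R (Nu x D) (Nu x' D')"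
| ren_def: "length ys = length ys' \<Longrightarrow> ren (updsR R ys ys') D1 D1' \<Longrightarrow> ren (updR R x x') D2 D2'
     \<Longrightarrow> ren R (Def b x ys D1 D2) (Def b x' ys' D1' D2')"
| ren_tm: "rent R M M' \<Longrightarrow> ren R (Tm M) (Tm M')"

lemma upd_rel: "(\<forall>a b. R a b \<longrightarrow> rel k (r a) (r' b)) \<Longrightarrow> rel k v v' \<Longrightarrow>
   \<forall>a b. updR R x x' a b \<longrightarrow> rel k ((r(x:=v)) a) ((r'(x':=v')) b)"
  by (auto simp: updR_def)

lemma upds_rel: "length ys = length ys' \<Longrightarrow> list_all2 (rel k) vs vs' \<Longrightarrow> length vs = length ys \<Longrightarrow>
   (\<forall>a b. R a b \<longrightarrow> rel k (r a) (r' b)) \<Longrightarrow>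
   \<forall>a b. updsR R ys ys' a b \<longrightarrow> rel k (upds r ys vs a) (upds r' ys' vs' b)"
proof (induction ys arbitrary: ys' vs vs' r r' R)
  case Nil
  then show ?case by simp
next
  case (Cons y ys)
  obtain y' ys2 where ys': "ys' = y'#ys2" using Cons.prems(1) by (cases ys') auto
  obtain v vs2 where vs: "vs = v#vs2" using Cons.prems(3) by (cases vs) auto
  obtain v' vs2' where vs': "vs' = v'#vs2'" using Cons.prems(2) vs by (cases vs') auto
  have h: "\<forall>a b. updR R y y' a b \<longrightarrow> rel k ((r(y:=v)) a) ((r'(y':=v')) b)"
    using upd_rel[OF Cons.prems(4)] Cons.prems(2) vs vs' by auto
  have "\<forall>a b. updsR (updR R y y') ys ys2 a b \<longrightarrow> rel k (upds (r(y:=v)) ys vs2 a) (upds (r'(y':=v')) ys2 vs2' b)"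
    by (rule Cons.IH) (use Cons.prems ys' vs vs' h in auto)
  then show ?case using ys' vs vs' by simp
qed

lemma clo_rel:
  assumes "length ys = length ys'"
    and "\<And>j vs vs' m'. j < k \<Longrightarrow> list_all2 (rel j) vs vs' \<Longrightarrow> length vs = length ys \<Longrightarrow>
          ev (upds s' ys' vs') D' m' \<Longrightarrow> m' \<le> j \<Longrightarrow> \<exists>m\<le>m'. ev (upds s ys vs) D m"
  shows "rel k (Clo ys D s) (Clo ys' D' s')"
  using assms(2)
proof (induction k)
  case 0
  then show ?case using assms(1) by (simp add: shape_def)
next
  case (Suc k)
  have rk: "rel k (Clo ys D s) (Clo ys' D' s')"
    apply (rule Suc.IH) using Suc.prems less_SucI by blast
  show ?case
  proof (simp only: rel.simps, intro conjI rk allI impI)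
    fix vs vs' n'
    assume a2: "list_all2 (rel k) vs vs'" and ap: "app (Clo ys' D' s') vs' n'" and le: "n' \<le> Suc k"
    have len: "length vs = length vs'" using a2 by (rule list_all2_lengthD)
    show "\<exists>n\<le>n'. app (Clo ys D s) vs n"
    proof (cases "length ys' = length vs'")
      case False
      then show ?thesis using len assms(1) by (auto intro!: app_bad exI[of _ 0])
    next
      case True
      from ap True obtain m' where m': "n' = Suc m'" "ev (upds s' ys' vs') D' m'"
        by (auto elim: appCloE)
      then obtain m where "m \<le> m'" "ev (upds s ys vs) D m"
        using Suc.prems[of k vs vs' m'] a2 len assms(1) le True by auto
      then show ?thesis using m' True len assms(1) by (auto intro!: app_clo)
    qed
  qed
qed

lemma RENT: "rent R M M' \<Longrightarrow> evt r' M' n' \<Longrightarrow> (\<forall>a b. R a b \<longrightarrow> rel n' (r a) (r' b)) \<Longrightarrow> \<exists>n\<le>n'. evt r M n"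
proof (induction arbitrary: n' rule: rent.induct)
  case (rent_out R x x' zs zs')
  from rent_out.prems(1) have ap: "app (r' x') (map r' zs') n'" by (auto elim: evtOutE)
  have "list_all2 (rel n') (map r zs) (map r' zs')"
    using rent_out.hyps(2) rent_out.prems(2) by (auto simp: list_all2_map1 list_all2_map2 elim!: list_all2_mono)
  then obtain n where "n \<le> n'" "app (r x) (map r zs) n"
    using app_rel[OF _ _ ap] rent_out by blast
  then show ?case by (auto intro: evt_out)
next
  case (rent_par R M M' N N')
  from rent_par.prems(1) obtain a b where ab: "n' = a + b" "evt r' M' a" "evt r' N' b" by (auto elim: evtParE)
  obtain a1 where "a1 \<le> a" "evt r M a1" using rent_par.IH(1)[OF ab(2)] rent_par.prems(2) ab(1)
    by (meson le_add1 rel_down)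
  moreover obtain b1 where "b1 \<le> b" "evt r N b1" using rent_par.IH(2)[OF ab(3)] rent_par.prems(2) ab(1)
    by (meson le_add2 rel_down)
  ultimately show ?case using ab(1) by (auto intro!: evt_par exI[of _ "a1+b1"])
qed

lemma REN: "ren R D D' \<Longrightarrow> ev r' D' n' \<Longrightarrow> (\<forall>a b. R a b \<longrightarrow> rel n' (r a) (r' b)) \<Longrightarrow> \<exists>n\<le>n'. ev r D n"
proof (induction arbitrary: r r' n' rule: ren.induct)
  case (ren_nu R x x' D D')
  from ren_nu.prems(1) have "ev (r'(x':=Atom)) D' n'" by (auto elim: evNuE)
  moreover have "\<forall>a b. updR R x x' a b \<longrightarrow> rel n' ((r(x:=Atom)) a) ((r'(x':=Atom)) b)"
    using upd_rel[OF ren_nu.prems(2) rel_Atom] .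
  ultimately show ?case using ren_nu.IH by (blast intro: ev_nu)
next
  case (ren_def ys ys' R D1 D1' x x' D2 D2' b)
  from ren_def.prems(1) have e2: "ev (r'(x':=Clo ys' D1' r')) D2' n'" by (auto elim: evDefE)
  have "rel n' (Clo ys D1 r) (Clo ys' D1' r')"
  proof (rule clo_rel[OF ren_def.hyps(1)])
    fix j vs vs' m'
    assume j: "j < n'" and a2: "list_all2 (rel j) vs vs'" and len: "length vs = length ys"
      and e: "ev (upds r' ys' vs') D1' m'" and m: "m' \<le> j"
    have "\<forall>a b. R a b \<longrightarrow> rel m' (r a) (r' b)" using ren_def.prems(2) j m
      by (meson le_trans less_imp_le rel_down)
    moreover have "list_all2 (rel m') vs vs'" using a2 m by (rule list_all2_rel_down)
    ultimately have "\<forall>a b. updsR R ys ys' a b \<longrightarrow> rel m' (upds r ys vs a) (upds r' ys' vs' b)"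
      using upds_rel ren_def.hyps(1) len by blast
    then show "\<exists>m\<le>m'. ev (upds r ys vs) D1 m" using ren_def.IH(1)[OF e] by blast
  qed
  then have "\<forall>a b. updR R x x' a b \<longrightarrow> rel n' ((r(x:=Clo ys D1 r)) a) ((r'(x':=Clo ys' D1' r')) b)"
    using upd_rel[OF ren_def.prems(2)] by blast
  then show ?case using ren_def.IH(2)[OF e2] by (blast intro: ev_def)
next
  case (ren_tm R M M')
  then show ?case using RENT by (blast elim: evTmE intro: ev_tm)
qed



lemma updR_mono: "(\<And>a b. R a b \<Longrightarrow> R' a b) \<Longrightarrow> updR R x x' a b \<Longrightarrow> updR R' x x' a b"
  by (auto simp: updR_def)

lemma updsR_mono: "(\<And>a b. R a b \<Longrightarrow> R' a b) \<Longrightarrow> updsR R ys ys' a b \<Longrightarrow> updsR R' ys ys' a b"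
proof (induction ys arbitrary: ys' R R')
  case Nil then show ?case by simp
next
  case (Cons y ys)
  then show ?case
  proof (cases ys')
    case Nil then show ?thesis using Cons by simp
  next
    case (Cons y' ys2)
    then show ?thesis using Cons.prems Cons.IH[of "updR R y y'" "updR R' y y'" ys2] updR_mono[of R R']
      by simp
  qed
qed

lemma rent_mono: "rent R M M' \<Longrightarrow> (\<And>a b. R a b \<Longrightarrow> R' a b) \<Longrightarrow> rent R' M M'"
  by (induction rule: rent.induct) (auto intro!: rent.intros elim: list_all2_mono)

lemma ren_mono: "ren R D D' \<Longrightarrow> (\<And>a b. R a b \<Longrightarrow> R' a b) \<Longrightarrow> ren R' D D'"
proof (induction arbitrary: R' rule: ren.induct)
  case (ren_nu R x x' D D')
  then show ?case by (metis ren.ren_nu updR_mono)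
next
  case (ren_def ys ys' R D1 D1' x x' D2 D2' b)
  then show ?case by (metis ren.ren_def updR_mono updsR_mono)
next
  case (ren_tm R M M')
  then show ?case by (metis ren.ren_tm rent_mono)
qed

lemma updR_conv: "updR (\<lambda>a b. R b a) x' x = (\<lambda>a b. updR R x x' b a)"
  by (auto simp: updR_def fun_eq_iff)

lemma updsR_conv_pt: "updsR (\<lambda>a b. R b a) ys' ys a b = updsR R ys ys' b a"
proof (induction ys arbitrary: ys' R)
  case Nil then show ?case by (cases ys') simp_all
next
  case (Cons y ys)
  note IH = Cons.IH
  show ?case
  proof (cases ys')
    case Nil then show ?thesis by simp
  next
    case Cons2: (Cons y' ys2)
    have e2: "updR (\<lambda>a b. R b a) y' y = (\<lambda>a b. updR R y y' b a)" by (rule updR_conv)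
    have "updsR (\<lambda>a b. R b a) ys' (y#ys) a b = updsR (updR (\<lambda>a b. R b a) y' y) ys2 ys a b"
      using Cons2 by simp
    also have "\<dots> = updsR (\<lambda>a b. updR R y y' b a) ys2 ys a b" by (simp only: e2)
    also have "\<dots> = updsR (updR R y y') ys ys2 b a" by (rule IH)
    also have "\<dots> = updsR R (y#ys) ys' b a" using Cons2 by simp
    finally show ?thesis .
  qed
qed

lemma updsR_conv: "updsR (\<lambda>a b. R b a) ys' ys = (\<lambda>a b. updsR R ys ys' b a)"
  by (intro ext) (rule updsR_conv_pt)

lemma rent_conv: "rent R M M' \<Longrightarrow> rent (\<lambda>a b. R b a) M' M"
  by (induction rule: rent.induct) (auto intro!: rent.intros simp: list_all2_conv_all_nth)

lemma ren_conv: "ren R D D' \<Longrightarrow> ren (\<lambda>a b. R b a) D' D"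
proof (induction rule: ren.induct)
  case (ren_nu R x x' D D')
  have "updR (\<lambda>a b. R b a) x' x = (\<lambda>a b. updR R x x' b a)" by (rule updR_conv)
  then have "ren (updR (\<lambda>a b. R b a) x' x) D' D" using ren_nu.IH by (simp only:)
  then show ?case by (rule ren.ren_nu)
next
  case (ren_def ys ys' R D1 D1' x x' D2 D2' b)
  have "updR (\<lambda>a b. R b a) x' x = (\<lambda>a b. updR R x x' b a)" by (rule updR_conv)
  then have h2: "ren (updR (\<lambda>a b. R b a) x' x) D2' D2" using ren_def.IH(2) by (simp only:)
  have "updsR (\<lambda>a b. R b a) ys' ys = (\<lambda>a b. updsR R ys ys' b a)" by (rule updsR_conv)
  then have h1: "ren (updsR (\<lambda>a b. R b a) ys' ys) D1' D1" using ren_def.IH(1) by (simp only:)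
  show ?case by (rule ren.ren_def[OF _ h1 h2]) (use ren_def.hyps(1) in simp)
next
  case (ren_tm R M M')
  then show ?case by (simp add: ren.ren_tm rent_conv)
qed

lemma updR_eq: "updR (=) x x = (=)"
  by (auto simp: updR_def fun_eq_iff)

lemma updsR_eq: "updsR (=) ys ys = (=)"
  by (induction ys) (auto simp: updR_eq)

lemma rent_id: "rent (=) M M"
  by (induction M) (auto intro!: rent.intros simp: list.rel_eq)

lemma ren_id: "ren (=) D D"
  by (induction D) (auto intro!: ren.intros rent_id simp: updR_eq updsR_eq)

lemma updsR_restr: "length ys = length ys' \<Longrightarrow> updsR R ys ys' a b \<Longrightarrow> (a \<notin> set ys \<longrightarrow> a \<in> A) \<Longrightarrow>
    updsR (\<lambda>a b. R a b \<and> a \<in> A) ys ys' a b"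
proof (induction ys arbitrary: ys' R A)
  case Nil then show ?case by simp
next
  case (Cons y ys)
  show ?case
  proof (cases ys')
    case Nil then show ?thesis using Cons by simp
  next
    case (Cons y' ys2)
    have "updsR (\<lambda>a b. updR R y y' a b \<and> a \<in> insert y A) ys ys2 a b"
      using Cons.IH[of ys2 "updR R y y'" "insert y A"] Cons.prems Cons by auto
    then have "updsR (updR (\<lambda>a b. R a b \<and> a \<in> A) y y') ys ys2 a b"
      by (rule updsR_mono[rotated]) (auto simp: updR_def)
    then show ?thesis using Cons by simp
  qed
qed

lemma rent_restr: "rent R M M' \<Longrightarrow> rent (\<lambda>a b. R a b \<and> a \<in> fvt M) M M'"
proof (induction rule: rent.induct)
  case (rent_out R x x' zs zs')
  then show ?case by (auto intro!: rent.intros simp: list_all2_conv_all_nth)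
next
  case (rent_par R M M' N N')
  show ?case
    by (rule rent.rent_par; rule rent_mono[OF rent_par.IH(1)] rent_mono[OF rent_par.IH(2)]) auto
qed

lemma ren_restr: "ren R D D' \<Longrightarrow> ren (\<lambda>a b. R a b \<and> a \<in> fv D) D D'"
proof (induction rule: ren.induct)
  case (ren_nu R x x' D D')
  show ?case
    by (rule ren.ren_nu, rule ren_mono[OF ren_nu.IH]) (auto simp: updR_def)
next
  case (ren_def ys ys' R D1 D1' x x' D2 D2' b)
  show ?case
  proof (rule ren.ren_def[OF ren_def.hyps(1)])
    show "ren (updsR (\<lambda>u w. R u w \<and> u \<in> fv (Def b x ys D1 D2)) ys ys') D1 D1'"
    proof (rule ren_mono[OF ren_def.IH(1)])
      fix u w assume "updsR R ys ys' u w \<and> u \<in> fv D1"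
      then have "updsR (\<lambda>u w. R u w \<and> u \<in> fv (Def b x ys D1 D2)) ys ys' u w"
        using updsR_restr[OF ren_def.hyps(1), of R u w "fv (Def b x ys D1 D2)"] by auto
      then show "updsR (\<lambda>u w. R u w \<and> u \<in> fv (Def b x ys D1 D2)) ys ys' u w" .
    qed
    show "ren (updR (\<lambda>u w. R u w \<and> u \<in> fv (Def b x ys D1 D2)) x x') D2 D2'"
      by (rule ren_mono[OF ren_def.IH(2)]) (auto simp: updR_def)
  qed
next
  case (ren_tm R M M')
  then show ?case using rent_restr by (auto intro: ren.ren_tm)
qed

lemma updR_graph: "inj p \<Longrightarrow> updR (\<lambda>a b. b = p a) x (p x) = (\<lambda>a b. b = p a)"
  by (auto simp: updR_def fun_eq_iff inj_eq)

lemma updsR_graph: "inj p \<Longrightarrow> updsR (\<lambda>a b. b = p a) ys (map p ys) = (\<lambda>a b. b = p a)"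
  by (induction ys) (auto simp: updR_graph)

lemma rent_perm: "rent (\<lambda>a b. b = p a) M (mapt p M)"
  by (induction M) (auto intro!: rent.intros simp: list_all2_conv_all_nth)

lemma ren_perm: "inj p \<Longrightarrow> ren (\<lambda>a b. b = p a) D (mapd p D)"
proof (induction D)
  case (Nu x D)
  then show ?case using ren_nu[of "\<lambda>a b. b = p a" x "p x"] by (simp add: updR_graph)
next
  case (Def b x ys D1 D2)
  then show ?case using ren_def[of ys "map p ys" "\<lambda>a b. b = p a" D1 "mapd p D1" x "p x"]
    by (simp add: updR_graph updsR_graph)
next
  case (Tm M)
  then show ?case by (simp add: ren_tm rent_perm)
qed

lemma updsR_keep: "R a b \<Longrightarrow> a \<notin> set ys \<Longrightarrow> b \<notin> set ys' \<Longrightarrow> updsR R ys ys' a b"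
proof (induction ys arbitrary: ys' R)
  case Nil then show ?case by simp
next
  case (Cons y ys)
  show ?case
  proof (cases ys')
    case Nil then show ?thesis using Cons.prems by simp
  next
    case (Cons y' ys2)
    have "updR R y y' a b" using Cons.prems Cons by (simp add: updR_def)
    then have "updsR (updR R y y') ys ys2 a b" using Cons.IH Cons.prems Cons by simp
    then show ?thesis using Cons by simp
  qed
qed

lemma updsR_last: "a \<in> set ys \<Longrightarrow> inj p \<Longrightarrow> updsR R ys (map p ys) a (p a)"
proof (induction ys arbitrary: R)
  case Nil then show ?case by simp
next
  case (Cons y ys)
  show ?case
  proof (cases "a \<in> set ys")
    case True then show ?thesis using Cons by simp
  next
    case False
    then have "a = y" using Cons by simp
    have "updsR (updR R y (p y)) ys (map p ys) y (p y)"
      by (rule updsR_keep) (use False \<open>a = y\<close> Cons.prems(2) in \<open>auto simp: updR_def inj_image_mem_iff\<close>)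
    then show ?thesis using \<open>a = y\<close> by simp
  qed
qed

lemma updsR_last_id: "a \<in> set ys \<Longrightarrow> updsR R ys ys a a"
  using updsR_last[of a ys id R] by simp

lemma rent_subst: "rent (\<lambda>a b. b = s a) M (mapt s M)"
  by (induction M) (auto intro!: rent.intros simp: list_all2_conv_all_nth)

lemma subst_aux: "\<forall>a. s a \<noteq> a \<longrightarrow> s a \<notin> B \<Longrightarrow> x \<in> B \<Longrightarrow> a \<noteq> x \<Longrightarrow> s a \<noteq> x"
  by metis

lemma subst_aux2: "\<forall>a. s a \<noteq> a \<longrightarrow> s a \<notin> B \<Longrightarrow> a \<notin> C \<Longrightarrow> C \<subseteq> B \<Longrightarrow> s a \<notin> C"
  by (metis subsetD)

lemma subst_aux3: "\<forall>a. s a \<noteq> a \<longrightarrow> s a \<notin> B \<Longrightarrow> B' \<subseteq> B \<Longrightarrow> \<forall>a. (s(x:=x)) a \<noteq> a \<longrightarrow> (s(x:=x)) a \<notin> B'"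
  by (simp add: subset_iff) blast

lemma subst_aux4: "\<forall>a. s a \<noteq> a \<longrightarrow> s a \<notin> B \<Longrightarrow> B' \<subseteq> B \<Longrightarrow>
   \<forall>a. (if a \<in> Y then a else s a) \<noteq> a \<longrightarrow> (if a \<in> Y then a else s a) \<notin> B'"
  by (simp add: subset_iff) blast

lemma mono_aux: assumes "\<forall>a. s a \<noteq> a \<longrightarrow> s a \<notin> B" "x \<in> B" "b = (s(x:=x)) a"
  shows "updR (\<lambda>a b. b = s a) x x a b"
proof (cases "a = x")
  case True then show ?thesis using assms(3) by (simp add: updR_def)
next
  case False
  have "s a \<noteq> x" by (rule subst_aux[OF assms(1,2) False])
  then show ?thesis using False assms(3) by (simp add: updR_def)
qed

lemma ren_subst: "(\<forall>a. s a \<noteq> a \<longrightarrow> s a \<notin> bn D) \<Longrightarrow> ren (\<lambda>a b. b = s a) D (substd s D)"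
proof (induction D arbitrary: s)
  case (Nu x D)
  have "ren (\<lambda>a b. b = (s(x:=x)) a) D (substd (s(x:=x)) D)"
    by (rule Nu.IH, rule subst_aux3[OF Nu.prems]) auto
  then have "ren (updR (\<lambda>a b. b = s a) x x) D (substd (s(x:=x)) D)"
  proof (rule ren_mono)
    fix a b assume "b = (s(x:=x)) a"
    then show "updR (\<lambda>a b. b = s a) x x a b" by (rule mono_aux[OF Nu.prems, rotated]) simp
  qed
  then show ?case by (auto intro: ren.ren_nu)
next
  case (Def b x ys D1 D2)
  let ?s1 = "\<lambda>n. if n \<in> set ys then n else s n"
  have "ren (\<lambda>a b. b = ?s1 a) D1 (substd ?s1 D1)"
    by (rule Def.IH(1), rule subst_aux4[OF Def.prems]) auto
  then have h1: "ren (updsR (\<lambda>a b. b = s a) ys ys) D1 (substd ?s1 D1)"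
  proof (rule ren_mono)
    fix a c assume "c = ?s1 a"
    then show "updsR (\<lambda>a b. b = s a) ys ys a c"
    proof (cases "a \<in> set ys")
      case True then show ?thesis using \<open>c = ?s1 a\<close> updsR_last_id by simp
    next
      case False
      have "s a \<notin> set ys" by (rule subst_aux2[OF Def.prems False]) auto
      then show ?thesis using False \<open>c = ?s1 a\<close> by (intro updsR_keep) auto
    qed
  qed
  have "ren (\<lambda>a b. b = (s(x:=x)) a) D2 (substd (s(x:=x)) D2)"
    by (rule Def.IH(2), rule subst_aux3[OF Def.prems]) auto
  then have h2: "ren (updR (\<lambda>a b. b = s a) x x) D2 (substd (s(x:=x)) D2)"
  proof (rule ren_mono)
    fix a b assume "b = (s(x:=x)) a"
    then show "updR (\<lambda>a b. b = s a) x x a b" by (rule mono_aux[OF Def.prems, rotated]) simp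
  qed
  show ?case using ren.ren_def[OF _ h1 h2] by simp
next
  case (Tm M)
  then show ?case by (simp add: ren_tm rent_subst)
qed

lemma rel_refl: "rel k v v"
proof (induction v arbitrary: k)
  case Atom then show ?case by (rule rel_Atom)
next
  case (Clo ys D s)
  show ?case
  proof (rule clo_rel[OF refl])
    fix j vs vs' m'
    assume j: "j < k" and a2: "list_all2 (rel j) vs vs'" and len: "length vs = length ys"
      and e: "ev (upds s ys vs') D m'" and m: "m' \<le> j"
    have a3: "list_all2 (rel m') vs vs'" by (rule list_all2_rel_down[OF a2 m])
    have ih: "\<forall>a b. a = b \<longrightarrow> rel m' (s a) (s b)"
    proof (intro allI impI)
      fix a b :: name assume "a = b"
      then show "rel m' (s a) (s b)" using Clo.IH[OF rangeI] by simp
    qed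
    have "\<forall>a b. updsR (=) ys ys a b \<longrightarrow> rel m' (upds s ys vs a) (upds s ys vs' b)"
      by (rule upds_rel[OF refl a3 len ih])
    then have "\<forall>a b. a = b \<longrightarrow> rel m' (upds s ys vs a) (upds s ys vs' b)" by (simp add: updsR_eq)
    then show "\<exists>m\<le>m'. ev (upds s ys vs) D m" by (rule REN[OF ren_id e])
  qed
qed

lemma clo_ren: "ren (updsR R ys ys') D D' \<Longrightarrow> length ys = length ys' \<Longrightarrow>
    (\<forall>a b. R a b \<longrightarrow> rel k (s a) (s' b)) \<Longrightarrow> rel k (Clo ys D s) (Clo ys' D' s')"
proof (rule clo_rel)
  fix j vs vs' m'
  assume r: "ren (updsR R ys ys') D D'" and l: "length ys = length ys'"
    and e0: "\<forall>a b. R a b \<longrightarrow> rel k (s a) (s' b)" and j: "j < k" and a2: "list_all2 (rel j) vs vs'"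
    and len: "length vs = length ys" and e: "ev (upds s' ys' vs') D' m'" and m: "m' \<le> j"
  have e1: "\<forall>a b. R a b \<longrightarrow> rel m' (s a) (s' b)" using e0 j m by (meson le_trans less_imp_le rel_down)
  have a3: "list_all2 (rel m') vs vs'" by (rule list_all2_rel_down[OF a2 m])
  have "\<forall>a b. updsR R ys ys' a b \<longrightarrow> rel m' (upds s ys vs a) (upds s' ys' vs' b)"
    by (rule upds_rel[OF l a3 len e1])
  then show "\<exists>m\<le>m'. ev (upds s ys vs) D m" by (rule REN[OF r e])
qed

lemma clo_fv: "(\<forall>a\<in>fv D - set ys. rel k (s a) (s' a)) \<Longrightarrow> rel k (Clo ys D s) (Clo ys D s')"
proof (rule clo_ren[where R = "\<lambda>a b. a = b \<and> a \<in> fv D - set ys"])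
  show "ren (updsR (\<lambda>a b. a = b \<and> a \<in> fv D - set ys) ys ys) D D"
  proof (rule ren_mono[OF ren_restr[OF ren_id]])
    fix a b assume ab: "a = b \<and> a \<in> fv D"
    show "updsR (\<lambda>a b. a = b \<and> a \<in> fv D - set ys) ys ys a b"
    proof (cases "a \<in> set ys")
      case True then show ?thesis using ab updsR_last_id[OF True] by simp
    next
      case False then show ?thesis using ab by (intro updsR_keep) auto
    qed
  qed
qed simp_all

lemma ev_fv: assumes e: "ev r' D n'" and h: "\<forall>a\<in>fv D. rel n' (r a) (r' a)" shows "\<exists>n\<le>n'. ev r D n"
  by (rule REN[OF ren_restr[OF ren_id] e]) (use h in simp)

abbreviation envrel :: "nat \<Rightarrow> (name \<Rightarrow> val) \<Rightarrow> (name \<Rightarrow> val) \<Rightarrow> bool" where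
  "envrel k r r' \<equiv> \<forall>a. rel k (r a) (r' a)"

definition sim :: "dcl \<Rightarrow> dcl \<Rightarrow> bool" where
  "sim D D' = (\<forall>r r' n'. ev r' D' n' \<longrightarrow> envrel n' r r' \<longrightarrow> (\<exists>n\<le>n'. ev r D n))"

lemma sim_refl: "sim D D"
  unfolding sim_def using REN[OF ren_id] by blast

lemma sim_trans: "sim D D2 \<Longrightarrow> sim D2 D3 \<Longrightarrow> sim D D3"
  unfolding sim_def
proof (intro allI impI)
  fix r r' n'
  assume s1: "\<forall>r r' n'. ev r' D2 n' \<longrightarrow> envrel n' r r' \<longrightarrow> (\<exists>n\<le>n'. ev r D n)"
    and s2: "\<forall>r r' n'. ev r' D3 n' \<longrightarrow> envrel n' r r' \<longrightarrow> (\<exists>n\<le>n'. ev r D2 n)"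
    and e: "ev r' D3 n'" and er: "envrel n' r r'"
  have rr: "envrel n' r' r'" by (simp add: rel_refl)
  have "\<exists>n\<le>n'. ev r' D2 n" using s2 e rr by blast
  then obtain n2 where n2: "n2 \<le> n'" "ev r' D2 n2" by blast
  have "envrel n2 r r'" using er n2(1) rel_down by blast
  then have "\<exists>n\<le>n2. ev r D n" using s1 n2(2) by blast
  then obtain n where "n \<le> n2" "ev r D n" by blast
  then show "\<exists>n\<le>n'. ev r D n" using n2(1) by (auto intro: le_trans)
qed

fun bval :: "bndr \<Rightarrow> (name \<Rightarrow> val) \<Rightarrow> val" where
  "bval (BNu x) r = Atom"
| "bval (BDef b x ys D1) r = Clo ys D1 r"

definition benv :: "bndr \<Rightarrow> (name \<Rightarrow> val) \<Rightarrow> (name \<Rightarrow> val)" where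
  "benv \<beta> r = r(bnd \<beta> := bval \<beta> r)"

lemma ev_bind1: "ev r (bind1 \<beta> D) n \<longleftrightarrow> ev (benv \<beta> r) D n"
  by (cases \<beta>) (auto simp: benv_def elim: evNuE evDefE intro: ev_nu ev_def)

lemma bval_rel: "(\<forall>a\<in>fvb \<beta>. rel k (r a) (r' a)) \<Longrightarrow> rel k (bval \<beta> r) (bval \<beta> r')"
  by (cases \<beta>) (auto intro: rel_Atom clo_fv)

lemma benv_rel: "envrel k r r' \<Longrightarrow> envrel k (benv \<beta> r) (benv \<beta> r')"
  using bval_rel[of \<beta> k r r'] by (auto simp: benv_def)



lemma benv_apply: "benv \<beta> r a = (if a = bnd \<beta> then bval \<beta> r else r a)"
  by (simp add: benv_def)

lemma REN_id: assumes "ev r' D n'" "envrel n' r r'" shows "\<exists>n\<le>n'. ev r D n"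
  by (rule REN[OF ren_id assms(1)]) (use assms(2) in simp)

lemma sim_bind1: "sim D D' \<Longrightarrow> sim (bind1 \<beta> D) (bind1 \<beta> D')"
  unfolding sim_def
proof (intro allI impI)
  fix r r' n'
  assume s: "\<forall>r r' n'. ev r' D' n' \<longrightarrow> envrel n' r r' \<longrightarrow> (\<exists>n\<le>n'. ev r D n)"
    and e: "ev r' (bind1 \<beta> D') n'" and er: "envrel n' r r'"
  have "ev (benv \<beta> r') D' n'" using e ev_bind1 by blast
  moreover have "envrel n' (benv \<beta> r) (benv \<beta> r')" using er by (rule benv_rel)
  ultimately have "\<exists>n\<le>n'. ev (benv \<beta> r) D n" using s by blast
  then show "\<exists>n\<le>n'. ev r (bind1 \<beta> D) n" using ev_bind1 by blast
qed

lemma clo_sim: assumes s: "sim D D'" and er: "envrel k r r'"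
  shows "rel k (Clo ys D r) (Clo ys D' r')"
proof (rule clo_rel[OF refl])
  fix j vs vs' m'
  assume j: "j < k" and a2: "list_all2 (rel j) vs vs'" and len: "length vs = length ys"
    and e: "ev (upds r' ys vs') D' m'" and m: "m' \<le> j"
  have a3: "list_all2 (rel m') vs vs'" by (rule list_all2_rel_down[OF a2 m])
  have ih: "\<forall>a b. a = b \<longrightarrow> rel m' (r a) (r' b)"
  proof (intro allI impI)
    fix a b :: name assume "a = b"
    then show "rel m' (r a) (r' b)" using er j m by (meson le_trans less_imp_le rel_down)
  qed
  have "\<forall>a b. updsR (=) ys ys a b \<longrightarrow> rel m' (upds r ys vs a) (upds r' ys vs' b)"
    by (rule upds_rel[OF refl a3 len ih])
  then have "envrel m' (upds r ys vs) (upds r' ys vs')" by (simp add: updsR_eq)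
  then show "\<exists>m\<le>m'. ev (upds r ys vs) D m" using s e unfolding sim_def by blast
qed

lemma sim_body: assumes s: "sim D1 D1'" shows "sim (Def b x ys D1 D) (Def b x ys D1' D)"
  unfolding sim_def
proof (intro allI impI)
  fix r r' n'
  assume e: "ev r' (Def b x ys D1' D) n'" and er: "envrel n' r r'"
  then have e2: "ev (r'(x:=Clo ys D1' r')) D n'" by (auto elim: evDefE)
  have "rel n' (Clo ys D1 r) (Clo ys D1' r')" by (rule clo_sim[OF s er])
  then have "envrel n' (r(x:=Clo ys D1 r)) (r'(x:=Clo ys D1' r'))" using er by simp
  then have "\<exists>n\<le>n'. ev (r(x:=Clo ys D1 r)) D n" by (rule REN_id[OF e2])
  then show "\<exists>n\<le>n'. ev r (Def b x ys D1 D) n" by (auto intro: ev_def)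
qed

lemma swapn_swapn[simp]: "swapn a c (swapn a c n) = n"
  by (simp add: swapn_def)

lemma inj_swapn: "inj (swapn a c)"
  by (metis injI swapn_swapn)

lemma alpha_env1: "c \<notin> fv D \<Longrightarrow> envrel k r r' \<Longrightarrow> rel k v v' \<Longrightarrow>
   \<forall>u w. (w = swapn a c u \<and> u \<in> fv D) \<longrightarrow> rel k ((r(a:=v)) u) ((r'(c:=v')) w)"
  by (auto simp: swapn_def)

lemma alpha_env2: "c \<notin> fv D \<Longrightarrow> envrel k r r' \<Longrightarrow> rel k v v' \<Longrightarrow>
   \<forall>u w. (u = swapn a c w \<and> w \<in> fv D) \<longrightarrow> rel k ((r(c:=v)) u) ((r'(a:=v')) w)"
  by (auto simp: swapn_def)

lemma ren_swap: "ren (\<lambda>u w. w = swapn a c u \<and> u \<in> fv D) D (mapd (swapn a c) D)"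
  using ren_restr[OF ren_perm[OF inj_swapn]] by simp

lemma ren_swap': "ren (\<lambda>u w. u = swapn a c w \<and> w \<in> fv D) (mapd (swapn a c) D) D"
  using ren_conv[OF ren_swap] by simp

lemma sim_alpha_nu: assumes c: "c \<notin> fv D"
  shows "sim (Nu a D) (Nu c (mapd (swapn a c) D)) \<and> sim (Nu c (mapd (swapn a c) D)) (Nu a D)"
proof
  show "sim (Nu a D) (Nu c (mapd (swapn a c) D))"
    unfolding sim_def
  proof (intro allI impI)
    fix r r' n' assume e: "ev r' (Nu c (mapd (swapn a c) D)) n'" and er: "envrel n' r r'"
    then have "ev (r'(c:=Atom)) (mapd (swapn a c) D) n'" by (auto elim: evNuE)
    then have "\<exists>n\<le>n'. ev (r(a:=Atom)) D n"
      by (rule REN[OF ren_swap _ alpha_env1[OF c er rel_Atom]])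
    then show "\<exists>n\<le>n'. ev r (Nu a D) n" by (auto intro: ev_nu)
  qed
  show "sim (Nu c (mapd (swapn a c) D)) (Nu a D)"
    unfolding sim_def
  proof (intro allI impI)
    fix r r' n' assume e: "ev r' (Nu a D) n'" and er: "envrel n' r r'"
    then have "ev (r'(a:=Atom)) D n'" by (auto elim: evNuE)
    then have "\<exists>n\<le>n'. ev (r(c:=Atom)) (mapd (swapn a c) D) n"
      by (rule REN[OF ren_swap' _ alpha_env2[OF c er rel_Atom]])
    then show "\<exists>n\<le>n'. ev r (Nu c (mapd (swapn a c) D)) n" by (auto intro: ev_nu)
  qed
qed

lemma clo_same: "envrel k r r' \<Longrightarrow> rel k (Clo ys D r) (Clo ys D r')"
  by (rule clo_sim[OF sim_refl])

lemma sim_alpha_def: assumes c: "c \<notin> fv D2"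
  shows "sim (Def b a ys D1 D2) (Def b c ys D1 (mapd (swapn a c) D2)) \<and>
         sim (Def b c ys D1 (mapd (swapn a c) D2)) (Def b a ys D1 D2)"
proof
  show "sim (Def b a ys D1 D2) (Def b c ys D1 (mapd (swapn a c) D2))"
    unfolding sim_def
  proof (intro allI impI)
    fix r r' n' assume e: "ev r' (Def b c ys D1 (mapd (swapn a c) D2)) n'" and er: "envrel n' r r'"
    then have "ev (r'(c:=Clo ys D1 r')) (mapd (swapn a c) D2) n'" by (auto elim: evDefE)
    then have "\<exists>n\<le>n'. ev (r(a:=Clo ys D1 r)) D2 n"
      by (rule REN[OF ren_swap _ alpha_env1[OF c er clo_same[OF er]]])
    then show "\<exists>n\<le>n'. ev r (Def b a ys D1 D2) n" by (auto intro: ev_def)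
  qed
  show "sim (Def b c ys D1 (mapd (swapn a c) D2)) (Def b a ys D1 D2)"
    unfolding sim_def
  proof (intro allI impI)
    fix r r' n' assume e: "ev r' (Def b a ys D1 D2) n'" and er: "envrel n' r r'"
    then have "ev (r'(a:=Clo ys D1 r')) D2 n'" by (auto elim: evDefE)
    then have "\<exists>n\<le>n'. ev (r(c:=Clo ys D1 r)) (mapd (swapn a c) D2) n"
      by (rule REN[OF ren_swap' _ alpha_env2[OF c er clo_same[OF er]]])
    then show "\<exists>n\<le>n'. ev r (Def b c ys D1 (mapd (swapn a c) D2)) n" by (auto intro: ev_def)
  qed
qed

lemma ren_par1: assumes a: "a \<notin> fv D1 - set ys" and c: "c \<notin> fv D1 - set ys"
  shows "ren (updsR (=) ys (map (swapn a c) ys)) D1 (mapd (swapn a c) D1)"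
proof (rule ren_mono[OF ren_swap])
  fix u w assume uw: "w = swapn a c u \<and> u \<in> fv D1"
  show "updsR (=) ys (map (swapn a c) ys) u w"
  proof (cases "u \<in> set ys")
    case True then show ?thesis using uw updsR_last[OF True inj_swapn] by simp
  next
    case False
    then have uac: "u \<noteq> a" "u \<noteq> c" using a c uw by auto
    then have sw: "swapn a c u = u" by (simp add: swapn_def)
    have "u \<notin> set (map (swapn a c) ys)"
    proof
      assume "u \<in> set (map (swapn a c) ys)"
      then obtain y where "y \<in> set ys" "u = swapn a c y" by auto
      then have "y = u" using swapn_swapn[of a c y] sw by metis
      then show False using False \<open>y \<in> set ys\<close> by simp
    qed
    then show ?thesis using uw sw False by (intro updsR_keep) auto
  qed
qed

lemma conv_eq: "(\<lambda>a b. (b::name) = a) = (=)"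
  by (auto simp: fun_eq_iff)

lemma ren_par2: assumes a: "a \<notin> fv D1 - set ys" and c: "c \<notin> fv D1 - set ys"
  shows "ren (updsR (=) (map (swapn a c) ys) ys) (mapd (swapn a c) D1) D1"
proof -
  have "ren (\<lambda>u w. updsR (=) ys (map (swapn a c) ys) w u) (mapd (swapn a c) D1) D1"
    using ren_conv[OF ren_par1[OF a c]] .
  moreover have "updsR (=) (map (swapn a c) ys) ys = (\<lambda>u w. updsR (=) ys (map (swapn a c) ys) w u)"
    using updsR_conv[of "(=)" "map (swapn a c) ys" ys] by (simp add: conv_eq)
  ultimately show ?thesis by simp
qed

lemma sim_def_clo: assumes cl: "\<And>k r r'. envrel k r r' \<Longrightarrow> rel k (Clo ys D1 r) (Clo ys' D1' r')"
  shows "sim (Def b x ys D1 D2) (Def b x ys' D1' D2)"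
  unfolding sim_def
proof (intro allI impI)
  fix r r' n'
  assume e: "ev r' (Def b x ys' D1' D2) n'" and er: "envrel n' r r'"
  then have e2: "ev (r'(x:=Clo ys' D1' r')) D2 n'" by (auto elim: evDefE)
  have "envrel n' (r(x:=Clo ys D1 r)) (r'(x:=Clo ys' D1' r'))" using er cl[OF er] by simp
  then have "\<exists>n\<le>n'. ev (r(x:=Clo ys D1 r)) D2 n" by (rule REN_id[OF e2])
  then show "\<exists>n\<le>n'. ev r (Def b x ys D1 D2) n" by (auto intro: ev_def)
qed

lemma sim_alpha_par: assumes a: "a \<notin> fv D1 - set ys" and c: "c \<notin> fv D1 - set ys"
  shows "sim (Def b x ys D1 D2) (Def b x (map (swapn a c) ys) (mapd (swapn a c) D1) D2) \<and>
         sim (Def b x (map (swapn a c) ys) (mapd (swapn a c) D1) D2) (Def b x ys D1 D2)"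
proof
  show "sim (Def b x ys D1 D2) (Def b x (map (swapn a c) ys) (mapd (swapn a c) D1) D2)"
    by (rule sim_def_clo, rule clo_ren[OF ren_par1[OF a c]]) auto
  show "sim (Def b x (map (swapn a c) ys) (mapd (swapn a c) D1) D2) (Def b x ys D1 D2)"
    by (rule sim_def_clo, rule clo_ren[OF ren_par2[OF a c]]) auto
qed

lemma swap_env: assumes "bnd b1 \<noteq> bnd b2" "bnd b1 \<notin> fvb b2" "bnd b2 \<notin> fvb b1" and er: "envrel k r r'"
  shows "envrel k (benv b2 (benv b1 r)) (benv b1 (benv b2 r'))"
proof
  fix u
  have v1: "rel k (bval b1 r) (bval b1 (benv b2 r'))"
    by (rule bval_rel) (use assms er in \<open>auto simp: benv_apply\<close>)
  have v2: "rel k (bval b2 (benv b1 r)) (bval b2 r')"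
    by (rule bval_rel) (use assms er in \<open>auto simp: benv_apply\<close>)
  show "rel k (benv b2 (benv b1 r) u) (benv b1 (benv b2 r') u)"
    using v1 v2 er assms(1) by (auto simp: benv_apply)
qed

lemma sim_swap1: assumes "bnd b1 \<noteq> bnd b2" "bnd b1 \<notin> fvb b2" "bnd b2 \<notin> fvb b1"
  shows "sim (bind1 b1 (bind1 b2 D)) (bind1 b2 (bind1 b1 D))"
  unfolding sim_def
proof (intro allI impI)
  fix r r' n'
  assume e: "ev r' (bind1 b2 (bind1 b1 D)) n'" and er: "envrel n' r r'"
  then have e2: "ev (benv b1 (benv b2 r')) D n'" by (simp add: ev_bind1)
  have "envrel n' (benv b2 (benv b1 r)) (benv b1 (benv b2 r'))" by (rule swap_env[OF assms er])
  then have "\<exists>n\<le>n'. ev (benv b2 (benv b1 r)) D n" by (rule REN_id[OF e2])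
  then show "\<exists>n\<le>n'. ev r (bind1 b1 (bind1 b2 D)) n" by (simp add: ev_bind1)
qed

lemma sim_gc: assumes "bnd \<beta> \<notin> fv D"
  shows "sim (bind1 \<beta> D) D \<and> sim D (bind1 \<beta> D)"
proof
  show "sim (bind1 \<beta> D) D" unfolding sim_def
  proof (intro allI impI)
    fix r r' n' assume e: "ev r' D n'" and er: "envrel n' r r'"
    have "\<forall>a\<in>fv D. rel n' (benv \<beta> r a) (r' a)" using assms er by (auto simp: benv_apply)
    then have "\<exists>n\<le>n'. ev (benv \<beta> r) D n" by (rule ev_fv[OF e])
    then show "\<exists>n\<le>n'. ev r (bind1 \<beta> D) n" by (simp add: ev_bind1)
  qed
  show "sim D (bind1 \<beta> D)" unfolding sim_def
  proof (intro allI impI)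
    fix r r' n' assume e: "ev r' (bind1 \<beta> D) n'" and er: "envrel n' r r'"
    then have e2: "ev (benv \<beta> r') D n'" by (simp add: ev_bind1)
    have "\<forall>a\<in>fv D. rel n' (r a) (benv \<beta> r' a)" using assms er by (auto simp: benv_apply)
    then show "\<exists>n\<le>n'. ev r D n" by (rule ev_fv[OF e2])
  qed
qed

lemma SC: "D \<equiv>\<^sub>\<pi> D' \<Longrightarrow> sim D D' \<and> sim D' D"
proof (induction rule: scong.induct)
  case (sc_refl D) then show ?case by (simp add: sim_refl)
next
  case (sc_sym D D') then show ?case by simp
next
  case (sc_trans D D' D'') then show ?case using sim_trans[of D D' D''] sim_trans[of D'' D' D] by simp
next
  case (sc_bind D D' \<beta>) then show ?case by (simp add: sim_bind1)
next
  case (sc_body D1 D1' b x ys D) then show ?case by (simp add: sim_body)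
next
  case (sc_alpha_nu c D a) then show ?case by (rule sim_alpha_nu)
next
  case (sc_alpha_def c D2 b a ys D1) then show ?case by (rule sim_alpha_def)
next
  case (sc_alpha_par a D1 ys c b x D2) then show ?case by (rule sim_alpha_par)
next
  case (sc_swap \<beta>1 \<beta>2 D) then show ?case by (simp add: sim_swap1)
next
  case (sc_gc \<beta> D) show ?case by (rule sim_gc[OF sc_gc.hyps(1)])
qed



inductive evc :: "(name \<Rightarrow> val) \<Rightarrow> tctx \<Rightarrow> nat \<Rightarrow> bool" where
  "evc r THole 0"
| "evc r T a \<Longrightarrow> evt r N b \<Longrightarrow> evc r (TParL T N) (a + b)"
| "evt r N b \<Longrightarrow> evc r T a \<Longrightarrow> evc r (TParR N T) (b + a)"

inductive_cases evcHoleE: "evc r THole n"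
inductive_cases evcLE: "evc r (TParL T N) n"
inductive_cases evcRE: "evc r (TParR N T) n"

lemma tplug_dec: "evt r (tplug T M) n \<Longrightarrow> \<exists>a b. evt r M a \<and> evc r T b \<and> n = a + b"
proof (induction T arbitrary: n)
  case THole then show ?case using evc.intros(1)[of r] by force
next
  case (TParL T N)
  from TParL.prems obtain a b where "evt r (tplug T M) a" "evt r N b" "n = a + b"
    by (auto elim: evtParE)
  then show ?case using TParL.IH by (fastforce intro: evc.intros)
next
  case (TParR N T)
  from TParR.prems obtain a b where "evt r N a" "evt r (tplug T M) b" "n = a + b"
    by (auto elim: evtParE)
  then show ?case using TParR.IH by (fastforce intro: evc.intros)
qed

lemma tplug_comp: "evc r T b \<Longrightarrow> evt r M a \<Longrightarrow> evt r (tplug T M) (a + b)"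
proof (induction arbitrary: a rule: evc.induct)
  case (1 r) then show ?case by simp
next
  case (2 r T a1 N b)
  then show ?case using evt_par[OF 2(3)[OF 2(4)] 2(2)] by (simp add: add.assoc)
next
  case (3 r N b T a1)
  then show ?case using evt_par[OF 3(1) 3(3)[OF 3(4)]] by (simp add: add.commute add.left_commute)
qed

lemma evt_loc: "evt r M n \<Longrightarrow> (\<forall>a\<in>fvt M. r' a = r a) \<Longrightarrow> evt r' M n"
proof (induction M arbitrary: n)
  case (Out x zs)
  have ap: "app (r x) (map r zs) n" using Out.prems(1) by (auto elim: evtOutE)
  have e1: "map r' zs = map r zs" using Out.prems(2) by auto
  have e2: "r' x = r x" using Out.prems(2) by auto
  show ?case using ap unfolding e1[symmetric] e2[symmetric] by (rule evt_out)
next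
  case (Par M N)
  then show ?case by (auto elim!: evtParE intro!: evt_par)
qed

lemma evc_loc: "evc r T b \<Longrightarrow> (\<forall>a\<in>tfv T. r' a = r a) \<Longrightarrow> evc r' T b"
  by (induction rule: evc.induct) (auto intro: evc.intros evt_loc)

lemma ext_ev: "ev r D a \<Longrightarrow> evc r T b \<Longrightarrow> topbn D \<inter> tfv T = {} \<Longrightarrow> ev r (ext D T) (a + b)"
proof (induction D arbitrary: r a)
  case (Nu x D)
  from Nu.prems(1) have "ev (r(x:=Atom)) D a" by (auto elim: evNuE)
  moreover have "evc (r(x:=Atom)) T b" by (rule evc_loc[OF Nu.prems(2)]) (use Nu.prems(3) in auto)
  ultimately show ?case using Nu.IH Nu.prems(3) by (auto intro: ev_nu)
next
  case (Def bb x ys D1 D2)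
  from Def.prems(1) have "ev (r(x:=Clo ys D1 r)) D2 a" by (auto elim: evDefE)
  moreover have "evc (r(x:=Clo ys D1 r)) T b" by (rule evc_loc[OF Def.prems(2)]) (use Def.prems(3) in auto)
  ultimately show ?case using Def.IH(2) Def.prems(3) by (auto intro: ev_def)
next
  case (Tm M)
  then show ?case by (auto elim!: evTmE intro!: ev_tm tplug_comp)
qed

lemma topbn_substd: "topbn (substd s D) = topbn D"
  by (induction D arbitrary: s) auto

lemma upds_map: "length ys = length zs \<Longrightarrow> (\<forall>b. r b = (case m b of None \<Rightarrow> r0 b | Some z \<Rightarrow> f z)) \<Longrightarrow>
   upds r ys (map f zs) b = (case (m(ys[\<mapsto>]zs)) b of None \<Rightarrow> r0 b | Some z \<Rightarrow> f z)"
proof (induction ys arbitrary: zs r m)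
  case Nil then show ?case by simp
next
  case (Cons y ys)
  then obtain z zs' where zs: "zs = z # zs'" by (cases zs) auto
  have "upds (r(y := f z)) ys (map f zs') b = (case ((m(y\<mapsto>z))(ys[\<mapsto>]zs')) b of None \<Rightarrow> r0 b | Some z \<Rightarrow> f z)"
    by (rule Cons.IH) (use Cons.prems zs in auto)
  then show ?case using zs by simp
qed

lemma map_upds_some: "(m(ys[\<mapsto>]zs)) a = Some z \<Longrightarrow> m a = Some z \<or> z \<in> set zs"
proof (induction ys arbitrary: zs m)
  case Nil then show ?case by simp
next
  case (Cons y ys)
  then show ?case
  proof (cases zs)
    case Nil then show ?thesis using Cons by simp
  next
    case (Cons z' zs')
    then have "((m(y\<mapsto>z'))(ys[\<mapsto>]zs')) a = Some z" using Cons.prems by simp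
    then have "(m(y\<mapsto>z')) a = Some z \<or> z \<in> set zs'" by (rule Cons.IH)
    then show ?thesis using Cons by (auto split: if_splits)
  qed
qed

lemma map_upds_none: assumes "(m(ys[\<mapsto>]zs)) a = None" "length ys = length zs" shows "a \<notin> set ys"
proof -
  have "a \<notin> dom (m(ys[\<mapsto>]zs))" using assms(1) by (simp add: domIff del: dom_map_upds)
  then show ?thesis using assms(2) by (simp add: dom_map_upds)
qed

lemma sub_ne: "sub ys zs a \<noteq> a \<Longrightarrow> sub ys zs a \<in> set zs"
  using map_upds_some[of Map.empty ys zs a] by (auto simp: sub_def split: option.splits)

lemma red_inner:
  assumes rx: "r x = Clo ys D rB" and len: "length ys = length zs"
    and xB: "x \<notin> bnd ` set B'" and fvB: "(fv D - set ys) \<inter> bnd ` set B' = {}"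
    and agree: "\<forall>a\<in>fv D - set ys. r a = rB a"
    and bnz: "bn D \<inter> set zs = {}" and tT: "topbn D \<inter> tfv T = {}"
    and e: "ev r (bind B' (Tm (tplug T (Out x zs)))) n"
  shows "\<exists>m<n. ev r (bind B' (ext (substd (sub ys zs) D) T)) m"
  using rx xB fvB agree e
proof (induction B' arbitrary: r n)
  case Nil
  then have "evt r (tplug T (Out x zs)) n" by (auto simp: bind_def elim: evTmE)
  then obtain a b where ab: "evt r (Out x zs) a" "evc r T b" "n = a + b" using tplug_dec by blast
  from ab(1) have "app (r x) (map r zs) a" by (auto elim: evtOutE)
  then obtain m where m: "a = Suc m" "ev (upds rB ys (map r zs)) D m"
    using Nil.prems(1) len by (auto elim: appCloE)
  let ?s = "sub ys zs"
  have cond: "\<forall>a. ?s a \<noteq> a \<longrightarrow> ?s a \<notin> bn D" using sub_ne bnz by blast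
  have rn: "ren (\<lambda>u w. u = ?s w \<and> w \<in> fv D) (substd ?s D) D"
    using ren_conv[OF ren_restr[OF ren_subst[OF cond]]] by simp
  have eqv: "r (?s w) = upds rB ys (map r zs) w" if w: "w \<in> fv D" for w
  proof -
    have u: "upds rB ys (map r zs) w = (case (Map.empty(ys[\<mapsto>]zs)) w of None \<Rightarrow> rB w | Some z \<Rightarrow> r z)"
      by (rule upds_map[OF len]) simp
    show ?thesis
    proof (cases "(Map.empty(ys[\<mapsto>]zs)) w")
      case None
      then have "w \<notin> set ys" using map_upds_none[OF _ len] by blast
      then have "r w = rB w" using Nil.prems(4) w by auto
      then show ?thesis using u None by (simp add: sub_def)
    qed (use u in \<open>simp add: sub_def\<close>)
  qed
  have "\<forall>u w. u = ?s w \<and> w \<in> fv D \<longrightarrow> rel m (r u) (upds rB ys (map r zs) w)"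
    using eqv rel_refl by auto
  then obtain m2 where m2: "m2 \<le> m" "ev r (substd ?s D) m2" using REN[OF rn m(2)] by blast
  have "ev r (ext (substd ?s D) T) (m2 + b)"
    by (rule ext_ev[OF m2(2) ab(2)]) (use tT in \<open>simp add: topbn_substd\<close>)
  then show ?case using m2(1) ab(3) m(1) by (auto simp: bind_def intro!: exI[of _ "m2 + b"])
next
  case (Cons \<beta> B')
  from Cons.prems(5) have h1: "ev (benv \<beta> r) (bind B' (Tm (tplug T (Out x zs)))) n"
    by (simp add: bind_def ev_bind1)
  have h2: "benv \<beta> r x = Clo ys D rB" using Cons.prems(1,2) by (simp add: benv_apply)
  have h3: "\<forall>a\<in>fv D - set ys. benv \<beta> r a = rB a"
  proof
    fix a assume a: "a \<in> fv D - set ys"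
    then have "a \<noteq> bnd \<beta>" using Cons.prems(3) by auto
    then show "benv \<beta> r a = rB a" using Cons.prems(4) a by (simp add: benv_apply)
  qed
  have xB: "x \<notin> bnd ` set B'" using Cons.prems(2) by simp
  have fvB: "(fv D - set ys) \<inter> bnd ` set B' = {}" using Cons.prems(3) by auto
  have "\<exists>m<n. ev (benv \<beta> r) (bind B' (ext (substd (sub ys zs) D) T)) m"
    by (rule Cons.IH[OF h2 xB fvB h3 h1])
  then show ?case by (simp add: bind_def ev_bind1)
qed

lemma bind_step: "(\<And>r n. ev r X n \<Longrightarrow> \<exists>m<n. ev r Y m) \<Longrightarrow> ev r (bind B X) n \<Longrightarrow> \<exists>m<n. ev r (bind B Y) m"
proof (induction B arbitrary: r n)
  case Nil then show ?case by (simp add: bind_def)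
next
  case (Cons \<beta> B)
  then have "ev (benv \<beta> r) (bind B X) n" by (simp add: bind_def ev_bind1)
  then obtain m where "m < n" "ev (benv \<beta> r) (bind B Y) m" using Cons by blast
  then show ?case by (auto simp: bind_def ev_bind1)
qed

lemma RED: "P \<longrightarrow>\<^sub>\<pi> Q \<Longrightarrow> ev r P n \<Longrightarrow> \<exists>m<n. ev r Q m"
proof (induction arbitrary: r n rule: red.induct)
  case (red_rep ys zs x B' D T B)
  show ?case
  proof (rule bind_step[OF _ red_rep.prems])
    fix r n assume e: "ev r (Def True x ys D (bind B' (Tm (tplug T (Out x zs))))) n"
    then have e2: "ev (r(x:=Clo ys D r)) (bind B' (Tm (tplug T (Out x zs)))) n" by (auto elim: evDefE)
    have "\<exists>m<n. ev (r(x:=Clo ys D r)) (bind B' (ext (substd (sub ys zs) D) T)) m"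
      by (rule red_inner[OF _ red_rep.hyps(1) red_rep.hyps(2) _ _ red_rep.hyps(4,5) e2])
         (use red_rep.hyps(3) in auto)
    then show "\<exists>m<n. ev r (Def True x ys D (bind B' (ext (substd (sub ys zs) D) T))) m"
      by (auto intro: ev_def)
  qed
next
  case (red_lin ys zs x B' D T B)
  show ?case
  proof (rule bind_step[OF _ red_lin.prems])
    fix r n assume e: "ev r (Def False x ys D (bind B' (Tm (tplug T (Out x zs))))) n"
    then have e2: "ev (r(x:=Clo ys D r)) (bind B' (Tm (tplug T (Out x zs)))) n" by (auto elim: evDefE)
    have "\<exists>m<n. ev (r(x:=Clo ys D r)) (bind B' (ext (substd (sub ys zs) D) T)) m"
      by (rule red_inner[OF _ red_lin.hyps(1) red_lin.hyps(2) _ _ red_lin.hyps(4,5) e2])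
         (use red_lin.hyps(3) in auto)
    then obtain m where m: "m < n" "ev (r(x:=Clo ys D r)) (bind B' (ext (substd (sub ys zs) D) T)) m"
      by blast
    have er: "envrel m (r(x:=Atom)) (r(x:=Clo ys D r))" by (simp add: rel_refl rel_Atom)
    obtain m2 where m2: "m2 \<le> m" "ev (r(x:=Atom)) (bind B' (ext (substd (sub ys zs) D) T)) m2"
      using REN_id[OF m(2) er] by blast
    have "ev r (Nu x (bind B' (ext (substd (sub ys zs) D) T))) m2" by (rule ev_nu[OF m2(2)])
    moreover have "m2 < n" using m2(1) m(1) by simp
    ultimately show "\<exists>m<n. ev r (Nu x (bind B' (ext (substd (sub ys zs) D) T))) m" by blast
  qed
next
  case (red_cong P P' Q' Q)
  have rr: "envrel n r r" by (simp add: rel_refl)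
  obtain n1 where n1: "n1 \<le> n" "ev r P' n1"
    using SC[OF red_cong.hyps(1)] red_cong.prems rr unfolding sim_def by blast
  obtain m1 where m1: "m1 < n1" "ev r Q' m1" using red_cong.IH[OF n1(2)] by blast
  have rr2: "envrel m1 r r" by (simp add: rel_refl)
  obtain m where "m \<le> m1" "ev r Q m"
    using SC[OF red_cong.hyps(3)] m1(2) rr2 unfolding sim_def by blast
  then show ?case using n1(1) m1(1) by (auto intro!: exI[of _ m])
qed



lemma sz_nth: "i < length As \<Longrightarrow> size (As ! i) < size (Ch As)"
proof -
  assume "i < length As"
  then have "As ! i \<in> set As" by simp
  then have "size (As ! i) \<le> size_list size As" by (rule size_list_estimation') simp
  then show ?thesis by simp
qed

function good :: "ty \<Rightarrow> val \<Rightarrow> bool" where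
  "good One v = True"
| "good (Ch As) v = (case v of Atom \<Rightarrow> True
     | Clo ys D s \<Rightarrow> length ys = length As \<and>
         (\<forall>vs. length vs = length As \<longrightarrow> (\<forall>i<length As. good (As!i) (vs!i)) \<longrightarrow> (\<exists>m. ev (upds s ys vs) D m)))"
  by pat_completeness auto
termination
  by (relation "measure (\<lambda>(A, v). size A)") (auto dest: sz_nth)

lemma good_Atom: "good A Atom"
  by (cases A) auto

lemma upds_good: "length ys = length As \<Longrightarrow> length vs = length As \<Longrightarrow> (\<forall>i<length As. good (As!i) (vs!i)) \<Longrightarrow>
   (\<forall>x A. G x = Some A \<longrightarrow> good A (r x)) \<Longrightarrow> (\<forall>x A. (G(ys[\<mapsto>]As)) x = Some A \<longrightarrow> good A (upds r ys vs x))"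
proof (induction ys arbitrary: As vs G r)
  case Nil then show ?case by simp
next
  case (Cons y ys)
  obtain A As' where As: "As = A # As'" using Cons.prems(1) by (cases As) auto
  obtain v vs' where vs: "vs = v # vs'" using Cons.prems(2) As by (cases vs) auto
  have g: "\<forall>x B. (G(y\<mapsto>A)) x = Some B \<longrightarrow> good B ((r(y:=v)) x)"
    using Cons.prems(3,4) As vs by auto
  have "\<forall>x B. ((G(y\<mapsto>A))(ys[\<mapsto>]As')) x = Some B \<longrightarrow> good B (upds (r(y:=v)) ys vs' x)"
    by (rule Cons.IH) (use Cons.prems As vs g in auto)
  then show ?case using As vs by simp
qed

lemma fund_t: "typt G M \<Longrightarrow> (\<forall>x A. G x = Some A \<longrightarrow> good A (r x)) \<Longrightarrow> \<exists>n. evt r M n"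
proof (induction rule: typt.induct)
  case (typt_out ys G x As)
  have gx: "good (Ch As) (r x)" using typt_out.prems typt_out.hyps(2) by blast
  show ?case
  proof (cases "r x")
    case Atom
    then show ?thesis by (metis app_atom evt_out)
  next
    case (Clo ys' D s)
    have len: "length ys = length As" using typt_out.hyps(3) by (rule list_all2_lengthD)
    have args: "\<forall>i<length As. good (As!i) (map r ys ! i)"
      using typt_out.hyps(3) typt_out.prems len by (auto simp: list_all2_conv_all_nth)
    have l1: "length ys' = length As" using gx Clo by simp
    have h: "\<forall>vs. length vs = length As \<longrightarrow> (\<forall>i<length As. good (As!i) (vs!i)) \<longrightarrow> (\<exists>m. ev (upds s ys' vs) D m)"
      using gx Clo by simp
    have "\<exists>m. ev (upds s ys' (map r ys)) D m" using h[rule_format, of "map r ys"] args len by simp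
    then obtain m where "ev (upds s ys' (map r ys)) D m" by blast
    then have "app (r x) (map r ys) (Suc m)" using Clo \<open>length ys' = length As\<close> len by (auto intro: app_clo)
    then show ?thesis by (blast intro: evt_out)
  qed
next
  case (typt_par G M1 M2)
  then show ?case by (blast intro: evt_par)
qed

lemma fund: "typd G D \<Longrightarrow> (\<forall>x A. G x = Some A \<longrightarrow> good A (r x)) \<Longrightarrow> \<exists>n. ev r D n"
proof (induction arbitrary: r rule: typd.induct)
  case (typd_nu G x A D)
  have "\<forall>y B. (G(x\<mapsto>A)) y = Some B \<longrightarrow> good B ((r(x:=Atom)) y)"
    using typd_nu.prems by (auto simp: good_Atom)
  then show ?case using typd_nu.IH by (blast intro: ev_nu)
next
  case (typd_def ys As G D1 x D2 b)
  have gc: "good (Ch As) (Clo ys D1 r)"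
  proof -
    have "\<exists>m. ev (upds r ys vs) D1 m" if "length vs = length As" "\<forall>i<length As. good (As!i) (vs!i)" for vs
    proof -
      have "\<forall>y B. (G(ys[\<mapsto>]As)) y = Some B \<longrightarrow> good B (upds r ys vs y)"
        by (rule upds_good) (use typd_def.hyps(2) that typd_def.prems in auto)
      then show ?thesis by (rule typd_def.IH(1))
    qed
    then show ?thesis using typd_def.hyps(2) by simp
  qed
  have "\<forall>y B. (G(x\<mapsto>Ch As)) y = Some B \<longrightarrow> good B ((r(x:=Clo ys D1 r)) y)"
    using typd_def.prems gc by auto
  then show ?case using typd_def.IH(2) by (blast intro: ev_def)
next
  case (typd_tm G M)
  then show ?case using fund_t by (blast intro: ev_tm)
qed

theorem corollary3:
  fixes \<Gamma> :: "name \<rightharpoonup> ty" and D :: dcl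
  assumes "finite (dom \<Gamma>)" and "typd \<Gamma> D"
  shows "\<not> (\<exists>f. f 0 = D \<and> (\<forall>n. f n \<longrightarrow>\<^sub>\<pi> f (Suc n)))"
proof
  assume "\<exists>f. f 0 = D \<and> (\<forall>n. f n \<longrightarrow>\<^sub>\<pi> f (Suc n))"
  then obtain f where f0: "f 0 = D" and fs: "\<And>n. f n \<longrightarrow>\<^sub>\<pi> f (Suc n)" by blast
  let ?r = "\<lambda>_::name. Atom"
  have "\<forall>x A. \<Gamma> x = Some A \<longrightarrow> good A (?r x)" by (simp add: good_Atom)
  then obtain c0 where c0: "ev ?r D c0" using fund[OF assms(2), of ?r] by blast
  have "\<exists>c. ev ?r (f k) c \<and> c + k \<le> c0" for k
  proof (induction k)
    case 0 then show ?case using c0 f0 by auto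
  next
    case (Suc k)
    then obtain c where c: "ev ?r (f k) c" "c + k \<le> c0" by blast
    obtain m where "m < c" "ev ?r (f (Suc k)) m" using RED[OF fs c(1)] by blast
    then show ?case using c(2) by (intro exI[of _ m]) simp
  qed
  then obtain c where "c + Suc c0 \<le> c0" by blast
  then show False by simp
qed


end
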